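(* Let $m,v>0$ and $s\geq 0$. Let $\mathfrak{n}$ be the five-dimensional real Lie algebra with basis $\{E_1,\dots,E_5\}$ whose only non-vanishing brackets (up to antisymmetry) are $$[E_1,E_2]=mE_3+sE_4,\qquad [E_1,E_3]=vE_4,\qquad [E_2,E_3]=vE_5.$$ Equip the corresponding simply connected nilpotent Lie group with the left-invariant Riemannian metric for which $\{E_1,\dots,E_5\}$ is orthonormal. Then this metric is an algebraic Ricci soliton if and only if $$s=0,\qquad v=\tfrac{\sqrt3}{2}m.$$ In that case $$c=-\tfrac32m^2,\qquad D=\mathrm{diag}\big(\tfrac58m^2,\tfrac58m^2,\tfrac54m^2,\tfrac{15}8m^2,\tfrac{15}8m^2\big),$$ where $D$ is written as a matrix with respect to the basis $\{E_1,\dots,E_5\}$.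
   Context: Let $G$ be a Lie group with Lie algebra $\mathfrak{g}$ and let $g$ be a left-invariant Riemannian metric on $G$. Let $\mathrm{Ric}$ denote the $(1,1)$ Ricci tensor of $g$, viewed as a linear endomorphism of $\mathfrak{g}$. The metric $g$ is an algebraic Ricci soliton if there are a real number $c$ and a derivation $D$ of $\mathfrak{g}$ such that $\mathrm{Ric}=c\,\mathrm{Id}+D$. The notation $\mathrm{diag}(a_1,\dots,a_5)$ denotes the diagonal matrix with these entries. *)

theory Defs
  imports Main "HOL-Analysis.Analysis"
begin

text \<open>A real Lie algebra of dimension n is described by its structure constants C
  w.r.t. a basis e_0,...,e_{n-1}: [e_i,e_j] = sum_k C i j k e_k.
  Vectors are coordinate functions nat => real (only coordinates < n matter).
  The left-invariant metric is the one making the basis orthonormal.\<close>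

definition bvec :: "nat \<Rightarrow> nat \<Rightarrow> real" where
  "bvec a = (\<lambda>k. if k = a then 1 else 0)"

definition ip :: "nat \<Rightarrow> (nat \<Rightarrow> real) \<Rightarrow> (nat \<Rightarrow> real) \<Rightarrow> real" where
  "ip n x y = (\<Sum>i<n. x i * y i)"

definition br :: "(nat \<Rightarrow> nat \<Rightarrow> nat \<Rightarrow> real) \<Rightarrow> nat \<Rightarrow> (nat \<Rightarrow> real) \<Rightarrow> (nat \<Rightarrow> real) \<Rightarrow> (nat \<Rightarrow> real)" where
  "br C n x y = (\<lambda>k. if k < n then (\<Sum>i<n. \<Sum>j<n. x i * y j * C i j k) else 0)"

text \<open>Levi-Civita connection of the left-invariant metric (Koszul formula):
  <nabla_x y, z> = 1/2 (<[x,y],z> - <[y,z],x> + <[z,x],y>).\<close>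
definition lc :: "(nat \<Rightarrow> nat \<Rightarrow> nat \<Rightarrow> real) \<Rightarrow> nat \<Rightarrow> (nat \<Rightarrow> real) \<Rightarrow> (nat \<Rightarrow> real) \<Rightarrow> (nat \<Rightarrow> real)" where
  "lc C n x y = (\<lambda>k. if k < n then
      (ip n (br C n x y) (bvec k) - ip n (br C n y (bvec k)) x + ip n (br C n (bvec k) x) y) / 2
     else 0)"

definition curv :: "(nat \<Rightarrow> nat \<Rightarrow> nat \<Rightarrow> real) \<Rightarrow> nat \<Rightarrow> (nat \<Rightarrow> real) \<Rightarrow> (nat \<Rightarrow> real) \<Rightarrow> (nat \<Rightarrow> real) \<Rightarrow> (nat \<Rightarrow> real)" where
  "curv C n x y z = (\<lambda>k. lc C n x (lc C n y z) k - lc C n y (lc C n x z) k - lc C n (br C n x y) z k)"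

definition ric_form :: "(nat \<Rightarrow> nat \<Rightarrow> nat \<Rightarrow> real) \<Rightarrow> nat \<Rightarrow> (nat \<Rightarrow> real) \<Rightarrow> (nat \<Rightarrow> real) \<Rightarrow> real" where
  "ric_form C n y z = (\<Sum>a<n. ip n (curv C n (bvec a) y z) (bvec a))"

text \<open>Matrix of the (1,1) Ricci tensor in the orthonormal basis:
  entry (i,j) = <Ric(e_j), e_i> = ric(e_j, e_i).\<close>
definition ricci_mat :: "(nat \<Rightarrow> nat \<Rightarrow> nat \<Rightarrow> real) \<Rightarrow> nat \<Rightarrow> nat \<Rightarrow> nat \<Rightarrow> real" where
  "ricci_mat C n i j = ric_form C n (bvec j) (bvec i)"

definition mapp :: "nat \<Rightarrow> (nat \<Rightarrow> nat \<Rightarrow> real) \<Rightarrow> (nat \<Rightarrow> real) \<Rightarrow> (nat \<Rightarrow> real)" where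
  "mapp n D x = (\<lambda>k. if k < n then (\<Sum>l<n. D k l * x l) else 0)"

definition is_derivation :: "(nat \<Rightarrow> nat \<Rightarrow> nat \<Rightarrow> real) \<Rightarrow> nat \<Rightarrow> (nat \<Rightarrow> nat \<Rightarrow> real) \<Rightarrow> bool" where
  "is_derivation C n D \<longleftrightarrow>
     (\<forall>x y. \<forall>k<n. mapp n D (br C n x y) k = br C n (mapp n D x) y k + br C n x (mapp n D y) k)"

definition alg_ricci_soliton :: "(nat \<Rightarrow> nat \<Rightarrow> nat \<Rightarrow> real) \<Rightarrow> nat \<Rightarrow> real \<Rightarrow> (nat \<Rightarrow> nat \<Rightarrow> real) \<Rightarrow> bool" where
  "alg_ricci_soliton C n c D \<longleftrightarrow> is_derivation C n D \<and>
     (\<forall>i<n. \<forall>j<n. ricci_mat C n i j = c * (if i = j then 1 else 0) + D i j)"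

text \<open>Structure constants of the 5-dim nilpotent algebra (E_1..E_5 = indices 0..4):
  [E1,E2] = m E3 + s E4, [E1,E3] = v E4, [E2,E3] = v E5.\<close>
definition nC :: "real \<Rightarrow> real \<Rightarrow> real \<Rightarrow> nat \<Rightarrow> nat \<Rightarrow> nat \<Rightarrow> real" where
  "nC m s v i j k =
     (if (i, j, k) = (0, 1, 2) then m else if (i, j, k) = (1, 0, 2) then - m
      else if (i, j, k) = (0, 1, 3) then s else if (i, j, k) = (1, 0, 3) then - s
      else if (i, j, k) = (0, 2, 3) then v else if (i, j, k) = (2, 0, 3) then - v
      else if (i, j, k) = (1, 2, 4) then v else if (i, j, k) = (2, 1, 4) then - v
      else 0)"

end

theory Submission
  imports Defs
begin
lemma sum5: "(\<Sum>i<(5::nat). f i) = f 0 + f 1 + f 2 + f 3 + (f 4 :: real)"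
  by (simp add: eval_nat_numeral)
lemma ip5: "ip 5 x y = x 0 * y 0 + x 1 * y 1 + x 2 * y 2 + x 3 * y 3 + x 4 * y 4"
  unfolding ip_def sum5 by simp
lemma br5: "br (nC m s v) 5 x y = (\<lambda>k. if k = 2 then m * (x 0 * y 1 - x 1 * y 0)
   else if k = 3 then s * (x 0 * y 1 - x 1 * y 0) + v * (x 0 * y 2 - x 2 * y 0)
   else if k = 4 then v * (x 1 * y 2 - x 2 * y 1) else 0)"
  unfolding br_def sum5 by (auto simp: nC_def algebra_simps)
lemma lc5: "lc (nC m s v) 5 x y = (\<lambda>k. if k = 0 then ((1/2) * m * x 1 * y 2 + (1/2) * m * x 2 * y 1 + (1/2) * s * x 1 * y 3 + (1/2) * s * x 3 * y 1 + (1/2) * v * x 2 * y 3 + (1/2) * v * x 3 * y 2) else if k = 1 then ((-1/2) * m * x 0 * y 2 + (-1/2) * m * x 2 * y 0 + (-1/2) * s * x 0 * y 3 + (-1/2) * s * x 3 * y 0 + (1/2) * v * x 2 * y 4 + (1/2) * v * x 4 * y 2) else if k = 2 then ((1/2) * m * x 0 * y 1 + (-1/2) * m * x 1 * y 0 + (-1/2) * v * x 0 * y 3 + (-1/2) * v * x 1 * y 4 + (-1/2) * v * x 3 * y 0 + (-1/2) * v * x 4 * y 1) else if k = 3 then ((1/2) * s * x 0 * y 1 + (-1/2) * s * x 1 * y 0 + (1/2) * v * x 0 * y 2 + (-1/2) * v * x 2 * y 0) else if k = 4 then ((1/2) * v * x 1 * y 2 + (-1/2) * v * x 2 * y 1)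 else 0)" (is "_ = ?R")
proof (rule ext)
  fix k
  show "lc (nC m s v) 5 x y k = ?R k"
  proof (cases "k < 5")
    case True
    then have "k = 0 \<or> k = 1 \<or> k = 2 \<or> k = 3 \<or> k = 4" by arith
    then show ?thesis
      by (elim disjE) (simp_all add: lc_def br5 ip5 bvec_def field_simps)
  qed (simp add: lc_def)
qed
lemma ric_0_0: "ricci_mat (nC m s v) 5 0 0 = -(m^2+s^2+v^2)/2"
  unfolding ricci_mat_def ric_form_def sum5 curv_def ip5 lc5 br5 by (simp add: bvec_def field_simps power2_eq_square)
lemma ric_0_1: "ricci_mat (nC m s v) 5 0 1 = 0"
  unfolding ricci_mat_def ric_form_def sum5 curv_def ip5 lc5 br5 by (simp add: bvec_def field_simps power2_eq_square)
lemma ric_0_2: "ricci_mat (nC m s v) 5 0 2 = 0"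
  unfolding ricci_mat_def ric_form_def sum5 curv_def ip5 lc5 br5 by (simp add: bvec_def field_simps power2_eq_square)
lemma ric_0_3: "ricci_mat (nC m s v) 5 0 3 = 0"
  unfolding ricci_mat_def ric_form_def sum5 curv_def ip5 lc5 br5 by (simp add: bvec_def field_simps power2_eq_square)
lemma ric_0_4: "ricci_mat (nC m s v) 5 0 4 = 0"
  unfolding ricci_mat_def ric_form_def sum5 curv_def ip5 lc5 br5 by (simp add: bvec_def field_simps power2_eq_square)
lemma ric_1_0: "ricci_mat (nC m s v) 5 1 0 = 0"
  unfolding ricci_mat_def ric_form_def sum5 curv_def ip5 lc5 br5 by (simp add: bvec_def field_simps power2_eq_square)
lemma ric_1_1: "ricci_mat (nC m s v) 5 1 1 = -(m^2+s^2+v^2)/2"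
  unfolding ricci_mat_def ric_form_def sum5 curv_def ip5 lc5 br5 by (simp add: bvec_def field_simps power2_eq_square)
lemma ric_1_2: "ricci_mat (nC m s v) 5 1 2 = -(s * v)/2"
  unfolding ricci_mat_def ric_form_def sum5 curv_def ip5 lc5 br5 by (simp add: bvec_def field_simps power2_eq_square)
lemma ric_1_3: "ricci_mat (nC m s v) 5 1 3 = 0"
  unfolding ricci_mat_def ric_form_def sum5 curv_def ip5 lc5 br5 by (simp add: bvec_def field_simps power2_eq_square)
lemma ric_1_4: "ricci_mat (nC m s v) 5 1 4 = 0"
  unfolding ricci_mat_def ric_form_def sum5 curv_def ip5 lc5 br5 by (simp add: bvec_def field_simps power2_eq_square)
lemma ric_2_0: "ricci_mat (nC m s v) 5 2 0 = 0"
  unfolding ricci_mat_def ric_form_def sum5 curv_def ip5 lc5 br5 by (simp add: bvec_def field_simps power2_eq_square)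
lemma ric_2_1: "ricci_mat (nC m s v) 5 2 1 = -(s * v)/2"
  unfolding ricci_mat_def ric_form_def sum5 curv_def ip5 lc5 br5 by (simp add: bvec_def field_simps power2_eq_square)
lemma ric_2_2: "ricci_mat (nC m s v) 5 2 2 = m^2/2 - v^2"
  unfolding ricci_mat_def ric_form_def sum5 curv_def ip5 lc5 br5 by (simp add: bvec_def field_simps power2_eq_square)
lemma ric_2_3: "ricci_mat (nC m s v) 5 2 3 = m * s / 2"
  unfolding ricci_mat_def ric_form_def sum5 curv_def ip5 lc5 br5 by (simp add: bvec_def field_simps power2_eq_square)
lemma ric_2_4: "ricci_mat (nC m s v) 5 2 4 = 0"
  unfolding ricci_mat_def ric_form_def sum5 curv_def ip5 lc5 br5 by (simp add: bvec_def field_simps power2_eq_square)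
lemma ric_3_0: "ricci_mat (nC m s v) 5 3 0 = 0"
  unfolding ricci_mat_def ric_form_def sum5 curv_def ip5 lc5 br5 by (simp add: bvec_def field_simps power2_eq_square)
lemma ric_3_1: "ricci_mat (nC m s v) 5 3 1 = 0"
  unfolding ricci_mat_def ric_form_def sum5 curv_def ip5 lc5 br5 by (simp add: bvec_def field_simps power2_eq_square)
lemma ric_3_2: "ricci_mat (nC m s v) 5 3 2 = m * s / 2"
  unfolding ricci_mat_def ric_form_def sum5 curv_def ip5 lc5 br5 by (simp add: bvec_def field_simps power2_eq_square)
lemma ric_3_3: "ricci_mat (nC m s v) 5 3 3 = (s^2+v^2)/2"
  unfolding ricci_mat_def ric_form_def sum5 curv_def ip5 lc5 br5 by (simp add: bvec_def field_simps power2_eq_square)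
lemma ric_3_4: "ricci_mat (nC m s v) 5 3 4 = 0"
  unfolding ricci_mat_def ric_form_def sum5 curv_def ip5 lc5 br5 by (simp add: bvec_def field_simps power2_eq_square)
lemma ric_4_0: "ricci_mat (nC m s v) 5 4 0 = 0"
  unfolding ricci_mat_def ric_form_def sum5 curv_def ip5 lc5 br5 by (simp add: bvec_def field_simps power2_eq_square)
lemma ric_4_1: "ricci_mat (nC m s v) 5 4 1 = 0"
  unfolding ricci_mat_def ric_form_def sum5 curv_def ip5 lc5 br5 by (simp add: bvec_def field_simps power2_eq_square)
lemma ric_4_2: "ricci_mat (nC m s v) 5 4 2 = 0"
  unfolding ricci_mat_def ric_form_def sum5 curv_def ip5 lc5 br5 by (simp add: bvec_def field_simps power2_eq_square)
lemma ric_4_3: "ricci_mat (nC m s v) 5 4 3 = 0"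
  unfolding ricci_mat_def ric_form_def sum5 curv_def ip5 lc5 br5 by (simp add: bvec_def field_simps power2_eq_square)
lemma ric_4_4: "ricci_mat (nC m s v) 5 4 4 = v^2/2"
  unfolding ricci_mat_def ric_form_def sum5 curv_def ip5 lc5 br5 by (simp add: bvec_def field_simps power2_eq_square)
lemmas ric_all = ric_0_0 ric_0_1 ric_0_2 ric_0_3 ric_0_4 ric_1_0 ric_1_1 ric_1_2 ric_1_3 ric_1_4 ric_2_0 ric_2_1 ric_2_2 ric_2_3 ric_2_4 ric_3_0 ric_3_1 ric_3_2 ric_3_3 ric_3_4 ric_4_0 ric_4_1 ric_4_2 ric_4_3 ric_4_4

lemma less5: "i < (5::nat) \<Longrightarrow> i = 0 \<or> i = 1 \<or> i = 2 \<or> i = 3 \<or> i = 4" by arith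

lemma fwd:
  assumes m: "m > 0" and v: "v > 0" and sol: "alg_ricci_soliton (nC m s v) 5 c D"
  shows "s = 0 \<and> v^2 = 3/4 * m^2 \<and> c = - 3/2 * m^2"
proof -
  from sol have der: "is_derivation (nC m s v) 5 D"
    and R: "\<And>i j. i < 5 \<Longrightarrow> j < 5 \<Longrightarrow> ricci_mat (nC m s v) 5 i j = c * (if i = j then 1 else 0) + D i j"
    unfolding alg_ricci_soliton_def by auto
  have Dij: "D i j = ricci_mat (nC m s v) 5 i j - c * (if i = j then 1 else 0)" if "i < 5" "j < 5" for i j
    using R[OF that] by simp
  have d00: "D 0 0 = -(m^2+s^2+v^2)/2 - c" using Dij[of 0 0] unfolding ric_0_0 by simp
  have d11: "D 1 1 = -(m^2+s^2+v^2)/2 - c" using Dij[of 1 1] unfolding ric_1_1 by simp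
  have d22: "D 2 2 = m^2/2 - v^2 - c" using Dij[of 2 2] unfolding ric_2_2 by simp
  have d33: "D 3 3 = (s^2+v^2)/2 - c" using Dij[of 3 3] unfolding ric_3_3 by simp
  have d12: "D 1 2 = -(s * v)/2" using Dij[of 1 2] unfolding ric_1_2 by simp
  have d23: "D 2 3 = m * s / 2" using Dij[of 2 3] unfolding ric_2_3 by simp
  have d10: "D 1 0 = 0" using Dij[of 1 0] unfolding ric_1_0 by simp
  have d20: "D 2 0 = 0" using Dij[of 2 0] unfolding ric_2_0 by simp
  have d21: "D 2 1 = -(s * v)/2" using Dij[of 2 1] unfolding ric_2_1 by simp
  have d24: "D 2 4 = 0" using Dij[of 2 4] unfolding ric_2_4 by simp
  have d34: "D 3 4 = 0" using Dij[of 3 4] unfolding ric_3_4 by simp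
  have d32: "D 3 2 = m * s / 2" using Dij[of 3 2] unfolding ric_3_2 by simp
  have d30: "D 3 0 = 0" using Dij[of 3 0] unfolding ric_3_0 by simp
  have d31: "D 3 1 = 0" using Dij[of 3 1] unfolding ric_3_1 by simp
  have d01: "D 0 1 = 0" using Dij[of 0 1] unfolding ric_0_1 by simp
  have d02: "D 0 2 = 0" using Dij[of 0 2] unfolding ric_0_2 by simp
  have d03: "D 0 3 = 0" using Dij[of 0 3] unfolding ric_0_3 by simp
  have d13: "D 1 3 = 0" using Dij[of 1 3] unfolding ric_1_3 by simp
  have d04: "D 0 4 = 0" using Dij[of 0 4] unfolding ric_0_4 by simp
  have d14: "D 1 4 = 0" using Dij[of 1 4] unfolding ric_1_4 by simp
  note dd = d00 d11 d22 d33 d12 d23 d10 d20 d21 d24 d34 d32 d30 d31 d01 d02 d03 d13 d04 d14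
  have E: "mapp 5 D (br (nC m s v) 5 x y) k = br (nC m s v) 5 (mapp 5 D x) y k + br (nC m s v) 5 x (mapp 5 D y) k"
    if "k < 5" for x y k using der that unfolding is_derivation_def by blast
  have e1: "v * D 2 3 = m * D 1 2"
    using E[of 2 "bvec 0" "bvec 2"] by (simp add: mapp_def sum5 br5 bvec_def mult.commute)
  have "m * s * v = 0" using e1 dd by (simp add: field_simps)
  with m v have s0: "s = 0" by simp
  have e2: "m * D 2 2 + s * D 2 3 = m * D 0 0 + m * D 1 1"
    using E[of 2 "bvec 0" "bvec 1"] by (simp add: mapp_def sum5 br5 bvec_def algebra_simps)
  have e3: "v * D 3 3 = v * D 0 0 + s * D 1 2 + v * D 2 2"
    using E[of 3 "bvec 0" "bvec 2"] by (simp add: mapp_def sum5 br5 bvec_def algebra_simps)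
  have "m * D 2 2 = m * (D 0 0 + D 1 1)" using e2 s0 by (simp add: algebra_simps)
  with m have e2': "D 2 2 = D 0 0 + D 1 1" by simp
  have "v * D 3 3 = v * (D 0 0 + D 2 2)" using e3 s0 by (simp add: algebra_simps)
  with v have e3': "D 3 3 = D 0 0 + D 2 2" by simp
  have d00': "D 0 0 = -(m^2+v^2)/2 - c" using d00 s0 by simp
  have d11': "D 1 1 = -(m^2+v^2)/2 - c" using d11 s0 by simp
  have d33': "D 3 3 = v^2/2 - c" using d33 s0 by simp
  have hc: "c = -3/2*m^2" using e2' d00' d11' d22 by (simp add: field_simps)
  have "v^2 = 3/4*m^2" using e3' d00' d22 d33' hc by (simp add: field_simps)
  with s0 hc show ?thesis by simp
qed

lemmas ric_all' = ric_all[unfolded One_nat_def]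

theorem mainTheorem10:
  fixes m s v :: real
  assumes "m > 0" and "v > 0" and "s \<ge> 0"
  shows "((\<exists>c D. alg_ricci_soliton (nC m s v) 5 c D) \<longleftrightarrow> (s = 0 \<and> v = sqrt 3 / 2 * m))
       \<and> (\<forall>c D. alg_ricci_soliton (nC m s v) 5 c D \<longrightarrow>
            c = - 3 / 2 * m\<^sup>2 \<and>
            (\<forall>i<5. \<forall>j<5. D i j = (if i = j then [5/8 * m\<^sup>2, 5/8 * m\<^sup>2, 5/4 * m\<^sup>2, 15/8 * m\<^sup>2, 15/8 * m\<^sup>2] ! i else 0)))"
proof -
  have F: "s = 0 \<and> v^2 = 3/4*m^2 \<and> c = -3/2*m^2" if "alg_ricci_soliton (nC m s v) 5 c D" for c D
    using fwd assms(1,2) that by blast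
  have sq: "v = sqrt 3 / 2 * m" if "v^2 = 3/4*m^2"
  proof (rule power2_eq_imp_eq)
    show "v^2 = (sqrt 3 / 2 * m)^2" using that by (simp add: power_mult_distrib power_divide)
    show "0 \<le> v" using assms by simp
    show "0 \<le> sqrt 3 / 2 * m" using assms by simp
  qed
  define L where "L = [5/8 * m\<^sup>2, 5/8 * m\<^sup>2, 5/4 * m\<^sup>2, 15/8 * m\<^sup>2, 15/8 * m\<^sup>2]"
  define D0 where "D0 = (\<lambda>i j. if i = j then L ! i else (0::real))"
  have bwd: "alg_ricci_soliton (nC m s v) 5 (-3/2*m^2) D0" if s0: "s = 0" and hv: "v = sqrt 3 / 2 * m"
  proof -
    have v2: "v^2 = 3/4*m^2" unfolding hv by (simp add: power_mult_distrib power_divide)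
    have "is_derivation (nC m s v) 5 D0"
      unfolding is_derivation_def
    proof (intro allI impI)
      fix x y :: "nat \<Rightarrow> real" and k :: nat
      assume "k < 5"
      then have "k = 0 \<or> k = 1 \<or> k = 2 \<or> k = 3 \<or> k = 4" by (rule less5)
      then show "mapp 5 D0 (br (nC m s v) 5 x y) k = br (nC m s v) 5 (mapp 5 D0 x) y k + br (nC m s v) 5 x (mapp 5 D0 y) k"
        by (elim disjE) (simp_all add: mapp_def sum5 br5 D0_def L_def s0 algebra_simps)
    qed
    moreover have "\<forall>i<5. \<forall>j<5. ricci_mat (nC m s v) 5 i j = (-3/2*m^2) * (if i = j then 1 else 0) + D0 i j"
    proof (intro allI impI)
      fix i j :: nat
      assume "i < 5" "j < 5"
      with less5[OF this(1)] less5[OF this(2)]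
      show "ricci_mat (nC m s v) 5 i j = (-3/2*m^2) * (if i = j then 1 else 0) + D0 i j"
        by (elim disjE) (simp_all add: ric_all' D0_def L_def s0 v2 field_simps)
    qed
    ultimately show ?thesis unfolding alg_ricci_soliton_def by blast
  qed
  have part2: "c = - 3 / 2 * m\<^sup>2 \<and>
            (\<forall>i<5. \<forall>j<5. D i j = (if i = j then [5/8 * m\<^sup>2, 5/8 * m\<^sup>2, 5/4 * m\<^sup>2, 15/8 * m\<^sup>2, 15/8 * m\<^sup>2] ! i else 0))"
    if sol: "alg_ricci_soliton (nC m s v) 5 c D" for c D
  proof -
    from F[OF sol] have s0: "s = 0" and v2: "v^2 = 3/4*m^2" and hc: "c = -3/2*m^2" by auto
    from sol have R: "\<And>i j. i < 5 \<Longrightarrow> j < 5 \<Longrightarrow> ricci_mat (nC m s v) 5 i j = c * (if i = j then 1 else 0) + D i j"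
      unfolding alg_ricci_soliton_def by auto
    have "\<forall>i<5. \<forall>j<5. D i j = (if i = j then [5/8 * m\<^sup>2, 5/8 * m\<^sup>2, 5/4 * m\<^sup>2, 15/8 * m\<^sup>2, 15/8 * m\<^sup>2] ! i else 0)"
    proof (intro allI impI)
      fix i j :: nat
      assume ij: "i < 5" "j < 5"
      have Dij: "D i j = ricci_mat (nC m s v) 5 i j - c * (if i = j then 1 else 0)"
        using R[OF ij] by simp
      from less5[OF ij(1)] less5[OF ij(2)] Dij
      show "D i j = (if i = j then [5/8 * m\<^sup>2, 5/8 * m\<^sup>2, 5/4 * m\<^sup>2, 15/8 * m\<^sup>2, 15/8 * m\<^sup>2] ! i else 0)"
        by (elim disjE) (simp_all add: ric_all' s0 v2 hc field_simps)
    qed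
    with hc show ?thesis by simp
  qed
  have part1: "(\<exists>c D. alg_ricci_soliton (nC m s v) 5 c D) \<longleftrightarrow> (s = 0 \<and> v = sqrt 3 / 2 * m)"
  proof
    assume "\<exists>c D. alg_ricci_soliton (nC m s v) 5 c D"
    then obtain c D where "alg_ricci_soliton (nC m s v) 5 c D" by blast
    from F[OF this] sq show "s = 0 \<and> v = sqrt 3 / 2 * m" by auto
  next
    assume "s = 0 \<and> v = sqrt 3 / 2 * m"
    with bwd show "\<exists>c D. alg_ricci_soliton (nC m s v) 5 c D" by blast
  qed
  from part1 part2 show ?thesis by blast
qed
end
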